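(* There exists an invertible $23\times23$ binary matrix such that the corresponding linear kernel has partial distance sequence $(1,2,2,2,2,2,4,4,4,4,4,4,8,8,8,8,8,8,8,12,12,12,16)$. Consequently $E_{23}\ge\frac1{23}\sum_{i=0}^{22}\log_{23}D_{min}^{(i)}\approx0.50705$.
   Context: A kernel of dimension $\ell$ is a bijection $g:\{0,1\}^\ell\to\{0,1\}^\ell$; a linear kernel is $g({\bf u})={\bf u}G$ over $\mathbb{F}_2$ for an invertible $\ell\times\ell$ binary matrix $G$. ${\bf a}\bullet{\bf b}$ denotes concatenation, $d_H$ Hamming distance. Partial distances: $D_{min}^{(i)}=\min\{d_H(g({\bf w}\bullet 0\bullet{\bf u}),g({\bf w}\bullet 1\bullet {\bf v})) : {\bf w}\in\{0,1\}^i,\ {\bf u},{\bf v}\in\{0,1\}^{\ell-i-1}\}$, $i=0,\dots,\ell-1$; exponent $E(g)=\frac1\ell\sum_{i}\log_\ell D_{min}^{(i)}$; $E_\ell=\max_g E(g)$ over all kernels of dimension $\ell$. *)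

theory Defs
  imports Complex_Main
begin

text \<open>Binary vectors of length l are bool lists (True = 1); arithmetic over GF(2)
  is expressed via parity (odd card) of sums.\<close>

definition vecs :: "nat \<Rightarrow> bool list set" where
  "vecs l = {u. length u = l}"

definition hamming :: "bool list \<Rightarrow> bool list \<Rightarrow> nat" where
  "hamming a b = card {i. i < length a \<and> a ! i \<noteq> b ! i}"

definition mat_mult_F2 :: "nat \<Rightarrow> (nat \<Rightarrow> nat \<Rightarrow> bool) \<Rightarrow> (nat \<Rightarrow> nat \<Rightarrow> bool) \<Rightarrow> nat \<Rightarrow> nat \<Rightarrow> bool" where
  "mat_mult_F2 l A B i j = odd (card {k. k < l \<and> A i k \<and> B k j})"

definition invertible_F2 :: "nat \<Rightarrow> (nat \<Rightarrow> nat \<Rightarrow> bool) \<Rightarrow> bool" where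
  "invertible_F2 l G \<longleftrightarrow> (\<exists>H. \<forall>i<l. \<forall>j<l.
      mat_mult_F2 l G H i j = (i = j) \<and> mat_mult_F2 l H G i j = (i = j))"

definition lin_kernel :: "nat \<Rightarrow> (nat \<Rightarrow> nat \<Rightarrow> bool) \<Rightarrow> bool list \<Rightarrow> bool list" where
  "lin_kernel l G u = map (\<lambda>j. odd (card {i. i < l \<and> u ! i \<and> G i j})) [0..<l]"

definition is_kernel :: "nat \<Rightarrow> (bool list \<Rightarrow> bool list) \<Rightarrow> bool" where
  "is_kernel l g \<longleftrightarrow> bij_betw g (vecs l) (vecs l)"

definition partial_dist :: "nat \<Rightarrow> (bool list \<Rightarrow> bool list) \<Rightarrow> nat \<Rightarrow> nat" where
  "partial_dist l g i = Min {hamming (g (w @ [False] @ u)) (g (w @ [True] @ v)) | w u v.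
      w \<in> vecs i \<and> u \<in> vecs (l - i - 1) \<and> v \<in> vecs (l - i - 1)}"

definition kernel_exponent :: "nat \<Rightarrow> (bool list \<Rightarrow> bool list) \<Rightarrow> real" where
  "kernel_exponent l g = (1 / real l) * (\<Sum>i<l. log (real l) (real (partial_dist l g i)))"

definition E_max :: "nat \<Rightarrow> real" where
  "E_max l = Max {kernel_exponent l g | g. is_kernel l g}"

definition pd_seq23 :: "nat list" where
  "pd_seq23 = [1,2,2,2,2,2,4,4,4,4,4,4,8,8,8,8,8,8,8,12,12,12,16]"

end

theory Submission imports Defs "HOL-Library.FuncSet" begin

definition xorv :: "bool list \<Rightarrow> bool list \<Rightarrow> bool list" where
  "xorv a b = map2 (\<noteq>) a b"

fun lc :: "nat \<Rightarrow> bool list list \<Rightarrow> bool list \<Rightarrow> bool list" where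
  "lc m (r#rs) (b#bs) = (if b then xorv r (lc m rs bs) else lc m rs bs)"
| "lc m _ _ = replicate m False"

definition wtf :: "bool list \<Rightarrow> nat" where "wtf c = length (filter id c)"

fun chk :: "nat \<Rightarrow> bool list list \<Rightarrow> bool list \<Rightarrow> bool \<Rightarrow> bool" where
  "chk d [] acc nz = (nz \<longrightarrow> d \<le> wtf acc)"
| "chk d (r#rs) acc nz = (chk d rs acc nz \<and> chk d rs (xorv r acc) True)"

fun dotr :: "bool list \<Rightarrow> bool list \<Rightarrow> bool" where
  "dotr (a#as) (b#bs) = ((a \<and> b) \<noteq> dotr as bs)"
| "dotr _ _ = False"

lemma xorv_length[simp]: "length (xorv a b) = min (length a) (length b)"
  by (simp add: xorv_def)

lemma xorv_nth[simp]: "j < length a \<Longrightarrow> j < length b \<Longrightarrow> xorv a b ! j = (a ! j \<noteq> b ! j)"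
  by (simp add: xorv_def)

lemma lc_length[simp]: "(\<forall>r\<in>set rs. length r = m) \<Longrightarrow> length (lc m rs u) = m"
  by (induction m rs u rule: lc.induct) auto

lemma card_Suc_split:
  "card {k. k < Suc n \<and> P k} = (if P 0 then Suc (card {k. k < n \<and> P (Suc k)}) else card {k. k < n \<and> P (Suc k)})"
proof -
  have e: "{k. k < Suc n \<and> P k} = (if P 0 then {0} else {}) \<union> Suc ` {k. k < n \<and> P (Suc k)}"
    by (auto simp: less_Suc_eq_0_disj)
  have c: "card (Suc ` {k. k < n \<and> P (Suc k)}) = card {k. k < n \<and> P (Suc k)}"
    by (simp add: card_image)
  show ?thesis unfolding e using c by (auto simp: card_insert_if)
qed

lemma lc_nth:
  "length rs = length u \<Longrightarrow> (\<forall>r\<in>set rs. length r = m) \<Longrightarrow> j < m \<Longrightarrow>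
   lc m rs u ! j = odd (card {k. k < length u \<and> u ! k \<and> rs ! k ! j})"
proof (induction m rs u rule: lc.induct)
  case (1 m r rs b bs)
  show ?case using 1 by (simp add: card_Suc_split del: One_nat_def)
qed auto

lemma xorv_comm: "xorv a b = xorv b a"
  by (rule nth_equalityI) auto

lemma xorv_assoc: "length a = length b \<Longrightarrow> length b = length c \<Longrightarrow> xorv (xorv a b) c = xorv a (xorv b c)"
  by (rule nth_equalityI) auto

lemma xorv_zero[simp]: "length a = m \<Longrightarrow> xorv a (replicate m False) = a"
  by (rule nth_equalityI) auto

lemma xorv_zero2[simp]: "length a = m \<Longrightarrow> xorv (replicate m False) a = a"
  by (rule nth_equalityI) auto

lemma xorv_self: "xorv a a = replicate (length a) False"
  by (rule nth_equalityI) auto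

lemma lc_zero: "lc m rs (replicate k False) = replicate m False"
proof (induction rs arbitrary: k)
  case Nil then show ?case by simp
next
  case (Cons r rs) then show ?case by (cases k) auto
qed

lemma lc_lin:
  "length x = length rs \<Longrightarrow> length y = length rs \<Longrightarrow> (\<forall>r\<in>set rs. length r = m) \<Longrightarrow>
   lc m rs (xorv x y) = xorv (lc m rs x) (lc m rs y)"
proof (induction rs arbitrary: x y)
  case Nil then show ?case by simp
next
  case (Cons r rs)
  then obtain a x' b y' where x: "x = a # x'" and y: "y = b # y'"
    by (metis length_Suc_conv)
  have xy: "xorv x y = (a \<noteq> b) # xorv x' y'" by (simp add: x y xorv_def)
  have l: "length (lc m rs x') = m" "length (lc m rs y') = m" "length r = m" using Cons.prems by auto
  have IH: "lc m rs (xorv x' y') = xorv (lc m rs x') (lc m rs y')" using Cons x y by auto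
  show ?case
    unfolding xy using l
    by (auto simp: x y IH intro!: nth_equalityI)
qed

lemma lc_comp:
  "length u = length B \<Longrightarrow> (\<forall>r\<in>set B. length r = length A) \<Longrightarrow> (\<forall>r\<in>set A. length r = m) \<Longrightarrow>
   lc m A (lc (length A) B u) = lc m (map (lc m A) B) u"
proof (induction B arbitrary: u)
  case Nil then show ?case by (simp add: lc_zero)
next
  case (Cons r rs)
  then obtain b u' where u: "u = b # u'" by (metis length_Suc_conv)
  show ?case using Cons u by (auto simp: lc_lin)
qed

lemma lc_id:
  assumes "length u = n"
  shows "lc n (map (\<lambda>i. map (\<lambda>j. i = j) [0..<n]) [0..<n]) u = u"
proof (rule nth_equalityI)
  show "length (lc n (map (\<lambda>i. map (\<lambda>j. i = j) [0..<n]) [0..<n]) u) = length u" using assms by simp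
  fix j assume j: "j < length (lc n (map (\<lambda>i. map (\<lambda>j. i = j) [0..<n]) [0..<n]) u)"
  then have jn: "j < n" by simp
  have "{k. k < length u \<and> u ! k \<and> map (\<lambda>i. map (\<lambda>j. i = j) [0..<n]) [0..<n] ! k ! j} =
        (if u ! j then {j} else {})" using jn assms by auto
  then show "lc n (map (\<lambda>i. map (\<lambda>j. i = j) [0..<n]) [0..<n]) u ! j = u ! j"
    using jn assms by (subst lc_nth) auto
qed

lemma lc_prefix: "lc m rs (replicate i False @ z) = lc m (drop i rs) z"
proof (induction i arbitrary: rs)
  case 0 then show ?case by simp
next
  case (Suc i) then show ?case by (cases rs) auto
qed

lemma lc_unit: "length r = m \<Longrightarrow> lc m (r # rs) (True # replicate k False) = r"
  by (simp add: lc_zero)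

lemma dotr_lin: "length a = length b \<Longrightarrow> dotr h (xorv a b) = (dotr h a \<noteq> dotr h b)"
proof (induction h arbitrary: a b)
  case Nil then show ?case by simp
next
  case (Cons x h)
  show ?case
  proof (cases a)
    case Nil then show ?thesis using Cons by (simp add: xorv_def)
  next
    case (Cons a0 a')
    with Cons.prems obtain b0 b' where b: "b = b0 # b'" by (metis length_Suc_conv)
    have "xorv a b = (a0 \<noteq> b0) # xorv a' b'" by (simp add: Cons b xorv_def)
    then show ?thesis using Cons.IH[of a' b'] Cons.prems Cons b by auto
  qed
qed

lemma dotr_zero: "dotr h (replicate m False) = False"
proof (induction h arbitrary: m)
  case Nil then show ?case by simp
next
  case (Cons a h) then show ?case by (cases m) auto
qed

lemma dotr_lc: "(\<forall>r\<in>set rs. length r = m \<and> \<not> dotr h r) \<Longrightarrow> \<not> dotr h (lc m rs u)"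
  by (induction m rs u rule: lc.induct) (auto simp: dotr_lin dotr_zero)

lemma dotr_card: "length h = length c \<Longrightarrow> dotr h c = odd (card {k. k < length c \<and> h ! k \<and> c ! k})"
proof (induction h c rule: dotr.induct)
  case (1 a as b bs) then show ?case by (cases a; cases b) (simp_all add: card_Suc_split del: One_nat_def)
qed auto

lemma wtf_card: "wtf c = card {k. k < length c \<and> c ! k}"
  unfolding wtf_def by (simp add: length_filter_conv_card)

lemma chk_correct:
  "chk d rows acc nz \<Longrightarrow> length y = length rows \<Longrightarrow> (\<forall>r\<in>set rows. length r = m) \<Longrightarrow>
   length acc = m \<Longrightarrow> (nz \<or> True \<in> set y) \<Longrightarrow> d \<le> wtf (xorv (lc m rows y) acc)"
proof (induction rows arbitrary: y acc nz)
  case Nil then show ?case by simp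
next
  case (Cons r rs)
  then obtain b y' where y: "y = b # y'" by (metis length_Suc_conv)
  show ?case
  proof (cases b)
    case True
    have "xorv (xorv r (lc m rs y')) acc = xorv (lc m rs y') (xorv r acc)"
      using Cons.prems by (auto simp: xorv_assoc xorv_comm intro!: nth_equalityI)
    then show ?thesis using Cons.IH[where y=y' and acc="xorv r acc" and nz=True] Cons.prems True y by auto
  next
    case False
    then show ?thesis using Cons.IH[where y=y' and acc=acc and nz=nz] Cons.prems y by auto
  qed
qed

lemma not_zero_True: "length c = n \<Longrightarrow> c \<noteq> replicate n False \<Longrightarrow> True \<in> set c"
  by (metis (full_types) in_set_conv_nth length_replicate nth_equalityI nth_replicate)

lemma wtf_pos: "True \<in> set c \<Longrightarrow> 1 \<le> wtf c"
  unfolding wtf_def by (metis One_nat_def Suc_leI filter_empty_conv id_apply length_greater_0_conv)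

lemma wt2:
  assumes "length c = n" "True \<in> set c" "\<not> dotr (replicate n True) c"
  shows "2 \<le> wtf c"
proof -
  let ?S = "{k. k < n \<and> c ! k}"
  have w: "wtf c = card ?S" using assms(1) by (simp add: wtf_card)
  have se: "{k. k < n \<and> replicate n True ! k \<and> c ! k} = ?S" by auto
  have "dotr (replicate n True) c = odd (card {k. k < length c \<and> replicate n True ! k \<and> c ! k})"
    using assms(1) by (intro dotr_card) simp
  then have "dotr (replicate n True) c = odd (card ?S)" using assms(1) se by simp
  then have ev: "even (card ?S)" using assms(3) by simp
  have "1 \<le> wtf c" using wtf_pos assms(2) .
  with ev w show ?thesis by (cases "card ?S"; cases "card ?S - 1") auto
qed

lemma wt4:
  assumes "length c = n" "True \<in> set c" "\<forall>h\<in>set H. length h = n \<and> \<not> dotr h c"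
    "replicate n True \<in> set H" "\<forall>a<n. \<forall>b<n. a \<noteq> b \<longrightarrow> (\<exists>h\<in>set H. h ! a \<noteq> h ! b)"
  shows "4 \<le> wtf c"
proof -
  let ?S = "{k. k < n \<and> c ! k}"
  have w: "wtf c = card ?S" using assms(1) by (simp add: wtf_card)
  have se: "{k. k < n \<and> replicate n True ! k \<and> c ! k} = ?S" by auto
  have "dotr (replicate n True) c = odd (card {k. k < length c \<and> replicate n True ! k \<and> c ! k})"
    using assms(1) by (intro dotr_card) simp
  then have "dotr (replicate n True) c = odd (card ?S)" using assms(1) se by simp
  then have ev: "even (card ?S)" using assms(3,4) by auto
  have "2 \<le> wtf c" using wt2 assms(1,2) \<open>even (card ?S)\<close> \<open>dotr (replicate n True) c = odd (card ?S)\<close> by auto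
  moreover have "card ?S \<noteq> 2"
  proof
    assume "card ?S = 2"
    then obtain a b where ab: "?S = {a, b}" "a \<noteq> b" by (meson card_2_iff)
    then have an: "a < n" "b < n" by auto
    then obtain h where h: "h \<in> set H" "h ! a \<noteq> h ! b" using assms(5) ab(2) by blast
    have lh: "length h = n" using assms(3) h(1) by auto
    have e1: "{k. k < length c \<and> h ! k \<and> c ! k} = {k \<in> ?S. h ! k}" using assms(1) by auto
    have e2: "{k \<in> ?S. h ! k} = (if h ! a then {a} else {b})" using ab h(2) by auto
    have "card {k. k < length c \<and> h ! k \<and> c ! k} = 1" unfolding e1 e2 by simp
    then have "dotr h c" using lh assms(1) dotr_card[of h c] by simp
    moreover have "\<not> dotr h c" using assms(3) h(1) by auto
    ultimately show False by simp
  qed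
  ultimately show ?thesis using ev w by presburger
qed
definition Rm :: "bool list list" where "Rm = [
  [True,False,False,False,False,False,False,False,False,False,False,False,False,False,False,False,False,False,False,False,False,False,False],
  [False,False,False,False,False,False,False,True,True,False,False,False,False,False,False,False,False,False,False,False,False,False,False],
  [False,True,False,False,False,False,False,False,False,False,False,False,False,False,True,False,False,False,False,False,False,False,False],
  [False,False,True,False,False,True,False,False,False,False,False,False,False,False,False,False,False,False,False,False,False,False,False],
  [False,False,False,False,False,False,False,False,False,False,False,False,False,False,True,False,False,True,False,False,False,False,False],
  [False,False,True,False,False,False,False,False,False,True,False,False,False,False,False,False,False,False,False,False,False,False,False],
  [False,False,True,False,False,True,False,False,False,False,False,True,True,False,False,False,False,False,False,False,False,False,False],
  [False,True,True,False,False,False,False,True,False,False,False,False,True,False,False,False,False,False,False,False,False,False,False],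
  [True,False,False,False,False,True,False,False,False,False,False,False,True,False,False,False,False,False,True,False,False,False,False],
  [False,False,False,False,True,True,True,False,False,False,False,False,False,False,False,False,False,False,False,False,True,False,False],
  [False,False,False,False,False,False,True,False,False,False,False,False,True,False,False,False,True,False,False,False,False,True,False],
  [False,False,False,False,False,False,True,False,True,False,False,False,False,True,False,False,False,False,False,True,False,False,False],
  [False,False,True,False,True,False,False,True,False,False,True,True,False,True,False,False,True,True,False,False,False,False,False],
  [True,False,False,False,False,True,False,False,False,False,False,False,True,True,False,False,True,False,False,False,True,True,True],
  [True,False,False,False,True,False,False,False,False,True,False,False,False,True,False,False,True,True,True,False,False,True,False],
  [False,False,False,False,True,False,False,True,False,False,False,True,False,False,True,False,False,True,True,False,False,True,True],
  [False,True,True,False,False,False,False,False,False,True,False,True,False,True,False,True,True,False,True,False,False,False,False],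
  [False,False,False,False,True,False,False,True,True,True,False,True,False,True,False,True,False,False,False,False,False,True,False],
  [False,True,False,False,False,False,True,True,False,False,True,False,True,True,False,False,False,True,False,True,False,False,False],
  [True,True,False,True,True,True,True,True,False,True,False,False,True,False,False,True,False,False,True,False,False,False,True],
  [True,True,True,True,False,True,True,True,False,False,True,True,False,True,False,False,False,True,False,False,False,True,False],
  [False,False,False,True,False,True,False,True,True,True,True,False,True,True,False,True,True,False,False,False,True,True,False],
  [True,False,True,False,True,True,True,True,True,True,False,True,False,True,True,True,True,False,False,True,False,True,True]]"

definition Im :: "bool list list" where "Im = [
  [True,False,False,False,False,False,False,False,False,False,False,False,False,False,False,False,False,False,False,False,False,False,False],
  [True,False,True,True,False,True,True,True,False,True,False,True,True,False,True,False,False,True,False,True,False,True,True],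
  [True,True,False,False,True,True,True,False,False,True,True,False,True,True,True,False,True,False,True,False,False,False,True],
  [True,False,True,False,False,False,True,False,True,False,True,True,False,False,False,False,False,False,False,True,False,False,True],
  [True,True,False,False,False,False,True,True,True,True,False,True,False,False,False,True,False,False,False,False,True,True,True],
  [True,True,False,True,True,True,True,False,False,True,True,False,True,True,True,False,True,False,True,False,False,False,True],
  [True,False,True,False,False,True,False,False,False,False,True,False,True,False,True,True,True,False,False,True,True,False,False],
  [True,True,True,True,False,False,False,False,False,True,False,False,True,False,False,True,False,False,False,True,False,True,False],
  [True,False,True,True,False,False,False,False,False,True,False,False,True,False,False,True,False,False,False,True,False,True,False],
  [True,True,False,False,True,False,True,False,False,True,True,False,True,True,True,False,True,False,True,False,False,False,True],
  [True,True,True,False,False,False,False,False,False,True,True,False,True,True,False,True,True,True,False,False,False,False,False],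
  [True,False,False,True,True,False,True,False,False,True,True,True,True,True,False,True,True,True,True,False,False,False,False],
  [True,False,False,False,True,False,False,False,False,True,True,True,True,True,False,True,True,True,True,False,False,False,False],
  [True,True,True,False,True,True,False,False,False,False,False,False,False,False,True,False,True,True,False,False,False,False,False],
  [True,False,False,True,False,True,True,True,False,True,False,True,True,False,True,False,False,True,False,True,False,True,True],
  [True,True,True,False,False,True,True,True,False,False,False,False,False,False,False,False,True,False,True,True,True,False,True],
  [True,True,True,True,False,True,False,False,True,False,True,True,False,True,True,False,False,False,False,False,True,True,True],
  [True,False,False,True,True,True,True,True,False,True,False,True,True,False,True,False,False,True,False,True,False,True,True],
  [True,True,False,True,False,True,True,False,True,False,False,True,False,False,True,True,False,True,False,False,False,False,True],
  [True,True,True,True,True,False,False,False,False,True,True,True,False,False,False,False,False,True,False,False,True,True,False],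
  [True,False,True,True,True,False,False,True,True,True,False,True,False,True,False,False,False,False,True,True,False,True,False],
  [True,True,False,True,True,False,False,False,True,True,False,False,False,False,False,False,False,True,True,True,False,True,True],
  [True,False,True,False,True,True,True,True,True,False,True,True,False,True,True,True,True,True,False,False,True,True,True]]"

definition Hc :: "bool list list" where "Hc = [
  [True,True,True,True,True,True,True,True,True,True,True,True,True,True,True,True,True,True,True,True,True,True,True],
  [False,True,True,False,True,False,False,False,True,True,True,True,False,True,True,True,False,True,False,False,True,False,False],
  [False,True,True,True,True,True,True,False,True,True,False,False,False,False,False,False,False,False,True,False,True,True,True],
  [True,True,True,True,True,False,False,False,False,False,True,True,False,True,True,False,True,False,True,True,True,True,True],
  [True,True,False,False,True,True,False,True,True,False,False,True,False,True,False,False,True,True,False,False,False,True,True],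
  [False,True,True,True,False,False,False,False,False,False,True,True,False,False,False,False,True,False,False,False,False,True,False]]"

definition Id23 :: "bool list list" where "Id23 = map (\<lambda>i. map (\<lambda>j. i = j) [0..<23]) [0..<23]"

definition dg :: "nat \<Rightarrow> nat" where
  "dg i = (if i = 0 then 1 else if i < 6 then 2 else if i < 12 then 4 else if i < 19 then 8 else if i < 22 then 12 else 16)"

lemma C_len: "length Rm = 23 \<and> length Im = 23 \<and> (\<forall>r\<in>set Rm. length r = 23) \<and> (\<forall>r\<in>set Im. length r = 23) \<and> (\<forall>r\<in>set Hc. length r = 23)"
  by code_simp
lemma C_RI: "map (lc 23 Im) Rm = Id23" unfolding Id23_def by code_simp
lemma C_IR: "map (lc 23 Rm) Im = Id23" unfolding Id23_def by code_simp
lemma C_chk8: "chk 8 (drop 12 Rm) (replicate 23 False) False" by code_simp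
lemma C_chk12: "chk 12 (drop 19 Rm) (replicate 23 False) False" by code_simp
lemma C_chk16: "chk 16 (drop 22 Rm) (replicate 23 False) False" by code_simp
lemma C_par6: "\<forall>r\<in>set (drop 6 Rm). \<forall>h\<in>set Hc. \<not> dotr h r" by code_simp
lemma C_par1: "\<forall>r\<in>set (drop 1 Rm). \<not> dotr (replicate 23 True) r" by code_simp
lemma C_ones: "replicate 23 True \<in> set Hc" by code_simp
lemma C_cols: "\<forall>a\<in>set [0..<23]. \<forall>b\<in>set [0..<23]. a \<noteq> b \<longrightarrow> (\<exists>h\<in>set Hc. h ! a \<noteq> h ! b)" by code_simp
lemma C_wt: "map wtf Rm = pd_seq23" unfolding pd_seq23_def by code_simp
lemma C_dg: "\<forall>i\<in>set [0..<23]. pd_seq23 ! i = dg i" unfolding pd_seq23_def dg_def by code_simp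

lemma Rm_len: "length Rm = 23" "\<forall>r\<in>set Rm. length r = 23" "length Im = 23" "\<forall>r\<in>set Im. length r = 23"
  using C_len by auto

lemma nonzero:
  assumes "length u = 23" "lc 23 Rm u = replicate 23 False"
  shows "u = replicate 23 False"
proof -
  have "u = lc 23 Id23 u" unfolding Id23_def using lc_id[of u 23] assms(1) by simp
  also have "\<dots> = lc 23 (map (lc 23 Im) Rm) u" by (simp add: C_RI)
  also have "\<dots> = lc 23 Im (lc (length Im) Rm u)"
    using lc_comp[of u Rm Im 23] Rm_len assms(1) by simp
  also have "\<dots> = replicate 23 False" using assms(2) Rm_len by (simp add: lc_zero)
  finally show ?thesis .
qed

lemma LB:
  assumes i: "i < 23" and z: "length z = 22 - i"
  shows "pd_seq23 ! i \<le> wtf (lc 23 (drop i Rm) (True # z))"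
proof -
  let ?u = "replicate i False @ True # z"
  define c where "c = lc 23 (drop i Rm) (True # z)"
  have cu: "c = lc 23 Rm ?u" unfolding c_def by (simp add: lc_prefix)
  have lu: "length ?u = 23" using i z by simp
  have "?u \<noteq> replicate 23 False"
  proof
    assume "?u = replicate 23 False"
    then have "?u ! i = replicate 23 False ! i" by simp
    then show False using i by (simp add: nth_append)
  qed
  then have "c \<noteq> replicate 23 False" using nonzero[OF lu] cu by auto
  moreover have lc: "length c = 23" unfolding cu using Rm_len by simp
  ultimately have tc: "True \<in> set c" using not_zero_True by blast
  have pd: "pd_seq23 ! i = dg i" using C_dg i by simp
  have shift: "\<And>s. s \<le> i \<Longrightarrow> c = lc 23 (drop s Rm) (replicate (i - s) False @ True # z)"
    unfolding c_def by (simp add: lc_prefix)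
  have rows: "\<And>s. \<forall>r\<in>set (drop s Rm). length r = 23" using Rm_len by (meson in_set_dropD)
  consider "i = 0" | "1 \<le> i" "i < 6" | "6 \<le> i" "i < 12" | "12 \<le> i" "i < 19" | "19 \<le> i" "i < 22" | "i = 22"
    using i by linarith
  then have "dg i \<le> wtf c"
  proof cases
    case 1 then show ?thesis using wtf_pos[OF tc] by (simp add: dg_def)
  next
    case 2
    have "\<not> dotr (replicate 23 True) c"
      unfolding shift[of 1, OF 2(1)] using C_par1 rows[of 1] by (intro dotr_lc) auto
    then show ?thesis using wt2[OF lc tc] 2 by (simp add: dg_def)
  next
    case 3
    have "\<forall>h\<in>set Hc. length h = 23 \<and> \<not> dotr h c"
    proof
      fix h assume h: "h \<in> set Hc"
      have "\<not> dotr h c"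
        unfolding shift[of 6, OF 3(1)] using C_par6 rows[of 6] h by (intro dotr_lc) auto
      then show "length h = 23 \<and> \<not> dotr h c" using C_len h by auto
    qed
    moreover have "\<forall>a<23. \<forall>b<23. a \<noteq> b \<longrightarrow> (\<exists>h\<in>set Hc. h ! a \<noteq> h ! b)"
      using C_cols by simp
    ultimately have "4 \<le> wtf c" using wt4[OF lc tc _ C_ones] by blast
    then show ?thesis using 3 by (simp add: dg_def)
  next
    case 4
    have "8 \<le> wtf (xorv (lc 23 (drop 12 Rm) (replicate (i - 12) False @ True # z)) (replicate 23 False))"
      by (rule chk_correct[OF C_chk8]) (use 4 i z rows[of 12] Rm_len in auto)
    then show ?thesis using 4 shift[of 12] rows[of 12] by (simp add: dg_def)
  next
    case 5
    have "12 \<le> wtf (xorv (lc 23 (drop 19 Rm) (replicate (i - 19) False @ True # z)) (replicate 23 False))"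
      by (rule chk_correct[OF C_chk12]) (use 5 i z rows[of 19] Rm_len in auto)
    then show ?thesis using 5 shift[of 19] rows[of 19] by (simp add: dg_def)
  next
    case 6
    have "16 \<le> wtf (xorv (lc 23 (drop 22 Rm) (replicate (i - 22) False @ True # z)) (replicate 23 False))"
      by (rule chk_correct[OF C_chk16]) (use 6 i z rows[of 22] Rm_len in auto)
    then show ?thesis using 6 shift[of 22] rows[of 22] by (simp add: dg_def)
  qed
  then show ?thesis using pd c_def by simp
qed

definition G0 :: "nat \<Rightarrow> nat \<Rightarrow> bool" where "G0 i j = Rm ! i ! j"
definition H0 :: "nat \<Rightarrow> nat \<Rightarrow> bool" where "H0 i j = Im ! i ! j"

lemma lk: "length u = 23 \<Longrightarrow> lin_kernel 23 G0 u = lc 23 Rm u"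
proof (rule nth_equalityI)
  assume u: "length u = 23"
  show "length (lin_kernel 23 G0 u) = length (lc 23 Rm u)" using Rm_len by (simp add: lin_kernel_def)
  fix j assume "j < length (lin_kernel 23 G0 u)"
  then have j: "j < 23" by (simp add: lin_kernel_def)
  show "lin_kernel 23 G0 u ! j = lc 23 Rm u ! j"
    using j u Rm_len by (simp add: lin_kernel_def lc_nth G0_def)
qed

lemma mm:
  assumes "length A = 23" "\<forall>r\<in>set A. length r = 23" "length B = 23" "\<forall>r\<in>set B. length r = 23"
    "map (lc 23 B) A = Id23" "i < 23" "j < 23"
  shows "mat_mult_F2 23 (\<lambda>i j. A ! i ! j) (\<lambda>i j. B ! i ! j) i j = (i = j)"
proof -
  have "lc 23 B (A ! i) ! j = odd (card {k. k < 23 \<and> A ! i ! k \<and> B ! k ! j})"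
    using assms by (subst lc_nth) auto
  moreover have "lc 23 B (A ! i) = Id23 ! i" using assms(5,6,1) by (metis nth_map)
  ultimately show ?thesis using assms(6,7) by (simp add: mat_mult_F2_def Id23_def)
qed

lemma inv_G0: "invertible_F2 23 G0"
  unfolding invertible_F2_def
proof (intro exI[of _ H0] allI impI conjI)
  fix i j :: nat assume "i < 23" "j < 23"
  then show "mat_mult_F2 23 G0 H0 i j = (i = j)" "mat_mult_F2 23 H0 G0 i j = (i = j)"
    using mm[of Rm Im i j] mm[of Im Rm i j] Rm_len C_RI C_IR
    unfolding G0_def[abs_def] H0_def[abs_def] by auto
qed

lemma xorv_append: "length w = length w' \<Longrightarrow> length x = length y \<Longrightarrow> w = w' \<Longrightarrow>
  xorv (w @ x) (w' @ y) = replicate (length w) False @ xorv x y"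
  by (rule nth_equalityI) (auto simp: nth_append)

lemma hamming_wtf: "length a = length b \<Longrightarrow> hamming a b = wtf (xorv a b)"
  unfolding hamming_def wtf_card by (intro arg_cong[where f=card]) auto

lemma pd:
  assumes i: "i < 23"
  shows "partial_dist 23 (lin_kernel 23 G0) i = pd_seq23 ! i"
proof -
  let ?g = "lin_kernel 23 G0"
  let ?S = "{hamming (?g (w @ [False] @ u)) (?g (w @ [True] @ v)) | w u v.
      w \<in> vecs i \<and> u \<in> vecs (23 - i - 1) \<and> v \<in> vecs (23 - i - 1)}"
  have key: "hamming (?g (w @ [False] @ u)) (?g (w @ [True] @ v)) = wtf (lc 23 (drop i Rm) (True # xorv u v))"
    if w: "length w = i" and u: "length u = 22 - i" and v: "length v = 22 - i" for w u v
  proof -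
    have l1: "length (w @ [False] @ u) = 23" "length (w @ [True] @ v) = 23" using w u v i by auto
    have "hamming (?g (w @ [False] @ u)) (?g (w @ [True] @ v)) =
          wtf (xorv (lc 23 Rm (w @ [False] @ u)) (lc 23 Rm (w @ [True] @ v)))"
      using l1 Rm_len by (simp add: lk hamming_wtf)
    also have "\<dots> = wtf (lc 23 Rm (xorv (w @ [False] @ u) (w @ [True] @ v)))"
      using l1 Rm_len by (simp add: lc_lin)
    also have "xorv (w @ [False] @ u) (w @ [True] @ v) = replicate i False @ True # xorv u v"
      using w u v xorv_append[of w w "[False] @ u" "[True] @ v"] by (simp add: xorv_def)
    finally show ?thesis by (simp add: lc_prefix)
  qed
  have fin: "finite ?S"
  proof -
    have "?S \<subseteq> (\<lambda>(w, u, v). hamming (?g (w @ [False] @ u)) (?g (w @ [True] @ v))) `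
              (vecs i \<times> vecs (23 - i - 1) \<times> vecs (23 - i - 1))"
    proof (rule subsetI)
      fix y assume "y \<in> ?S"
      then obtain w u v where "y = hamming (?g (w @ [False] @ u)) (?g (w @ [True] @ v))"
        "w \<in> vecs i" "u \<in> vecs (23 - i - 1)" "v \<in> vecs (23 - i - 1)" by blast
      then show "y \<in> (\<lambda>(w, u, v). hamming (?g (w @ [False] @ u)) (?g (w @ [True] @ v))) `
              (vecs i \<times> vecs (23 - i - 1) \<times> vecs (23 - i - 1))"
        by (intro image_eqI[where x="(w, u, v)"]) auto
    qed
    moreover have "\<And>n. finite (vecs n)"
    proof -
      fix n
      have "vecs n = {xs. set xs \<subseteq> (UNIV :: bool set) \<and> length xs = n}" by (auto simp: vecs_def)
      then show "finite (vecs n)" using finite_lists_length_eq[of "UNIV :: bool set" n] by simp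
    qed
    ultimately show ?thesis by (meson finite_SigmaI finite_imageI finite_subset)
  qed
  have lb: "\<forall>y\<in>?S. pd_seq23 ! i \<le> y"
  proof
    fix y assume "y \<in> ?S"
    then obtain w u v where y: "y = hamming (?g (w @ [False] @ u)) (?g (w @ [True] @ v))"
      and w: "length w = i" and u: "length u = 22 - i" and v: "length v = 22 - i"
      by (auto simp: vecs_def)
    have "length (xorv u v) = 22 - i" using u v by simp
    then show "pd_seq23 ! i \<le> y" unfolding y key[OF w u v] using LB[OF i] by blast
  qed
  have mem: "pd_seq23 ! i \<in> ?S"
  proof -
    let ?w = "replicate i False" and ?z = "replicate (22 - i) False"
    have "hamming (?g (?w @ [False] @ ?z)) (?g (?w @ [True] @ ?z)) = wtf (lc 23 (drop i Rm) (True # xorv ?z ?z))"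
      by (rule key) auto
    also have "xorv ?z ?z = ?z" by (simp add: xorv_self)
    also have "drop i Rm = Rm ! i # drop (Suc i) Rm" using i Rm_len by (simp add: Cons_nth_drop_Suc)
    also have "lc 23 (Rm ! i # drop (Suc i) Rm) (True # ?z) = Rm ! i"
      using i Rm_len by (intro lc_unit) simp
    also have "wtf (Rm ! i) = pd_seq23 ! i" using C_wt i Rm_len by (metis nth_map)
    finally have h: "hamming (?g (?w @ [False] @ ?z)) (?g (?w @ [True] @ ?z)) = pd_seq23 ! i" .
    have m: "?w \<in> vecs i" "?z \<in> vecs (23 - i - 1)" by (auto simp: vecs_def)
    show ?thesis unfolding mem_Collect_eq
      by (intro exI[of _ ?w] exI[of _ ?z] exI[of _ ?z] conjI) (use h m in simp_all)
  qed
  show ?thesis unfolding partial_dist_def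
    by (rule Min_eqI[OF fin]) (use lb mem in auto)
qed

lemma lk_len: "length (lin_kernel 23 G0 u) = 23" by (simp add: lin_kernel_def)

lemma is_ker: "is_kernel 23 (lin_kernel 23 G0)"
  unfolding is_kernel_def
proof (rule bij_betw_imageI)
  show "inj_on (lin_kernel 23 G0) (vecs 23)"
  proof (rule inj_onI)
    fix a b assume a: "a \<in> vecs 23" and b: "b \<in> vecs 23" and e: "lin_kernel 23 G0 a = lin_kernel 23 G0 b"
    have la: "length a = 23" and lb: "length b = 23" using a b by (auto simp: vecs_def)
    have "lc 23 Rm (xorv a b) = xorv (lc 23 Rm a) (lc 23 Rm b)" using la lb Rm_len by (simp add: lc_lin)
    also have "\<dots> = replicate 23 False" using e la lb Rm_len by (simp add: lk xorv_self)
    finally have z: "lc 23 Rm (xorv a b) = replicate 23 False" .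
    have "xorv a b = replicate 23 False" by (rule nonzero) (use la lb z in simp_all)
    then have xz: "xorv a b = replicate 23 False" .
    show "a = b"
    proof (rule nth_equalityI)
      show "length a = length b" using la lb by simp
      fix k assume k: "k < length a"
      have "xorv a b ! k = replicate 23 False ! k" using xz by (rule arg_cong)
      then show "a ! k = b ! k" using k la lb by simp
    qed
  qed
  show "lin_kernel 23 G0 ` vecs 23 = vecs 23"
  proof
    show "lin_kernel 23 G0 ` vecs 23 \<subseteq> vecs 23" by (auto simp: vecs_def lk_len)
    show "vecs 23 \<subseteq> lin_kernel 23 G0 ` vecs 23"
    proof
      fix y assume y: "y \<in> vecs 23"
      then have ly: "length y = 23" by (simp add: vecs_def)
      have lx: "length (lc 23 Im y) = 23" using Rm_len by simp
      have "lin_kernel 23 G0 (lc 23 Im y) = lc 23 Rm (lc 23 Im y)" using lx by (simp add: lk)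
      also have "\<dots> = lc 23 (map (lc 23 Rm) Im) y"
        using lc_comp[of y Im Rm 23] ly Rm_len by simp
      also have "\<dots> = y" unfolding C_IR Id23_def using lc_id[of y 23] ly by simp
      finally have yy: "lin_kernel 23 G0 (lc 23 Im y) = y" .
      show "y \<in> lin_kernel 23 G0 ` vecs 23"
        by (rule image_eqI[where x="lc 23 Im y"]) (use yy lx in \<open>simp_all add: vecs_def\<close>)
    qed
  qed
qed

lemma pd_restrict:
  assumes "i < l"
  shows "partial_dist l (restrict g (vecs l)) i = partial_dist l g i"
proof -
  have r: "restrict g (vecs l) (w @ [b] @ u) = g (w @ [b] @ u)"
    if "w \<in> vecs i" "u \<in> vecs (l - i - 1)" for w u b
  proof -
    have "length (w @ [b] @ u) = l" using that assms by (auto simp: vecs_def)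
    then show ?thesis by (simp add: vecs_def)
  qed
  have "{hamming (restrict g (vecs l) (w @ [False] @ u)) (restrict g (vecs l) (w @ [True] @ v)) | w u v.
      w \<in> vecs i \<and> u \<in> vecs (l - i - 1) \<and> v \<in> vecs (l - i - 1)} =
    {hamming (g (w @ [False] @ u)) (g (w @ [True] @ v)) | w u v.
      w \<in> vecs i \<and> u \<in> vecs (l - i - 1) \<and> v \<in> vecs (l - i - 1)}"
  proof (rule Collect_cong)
    fix x
    show "(\<exists>w u v. x = hamming (restrict g (vecs l) (w @ [False] @ u)) (restrict g (vecs l) (w @ [True] @ v)) \<and>
      w \<in> vecs i \<and> u \<in> vecs (l - i - 1) \<and> v \<in> vecs (l - i - 1)) =
      (\<exists>w u v. x = hamming (g (w @ [False] @ u)) (g (w @ [True] @ v)) \<and>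
      w \<in> vecs i \<and> u \<in> vecs (l - i - 1) \<and> v \<in> vecs (l - i - 1))"
    proof
      assume "\<exists>w u v. x = hamming (restrict g (vecs l) (w @ [False] @ u)) (restrict g (vecs l) (w @ [True] @ v)) \<and>
        w \<in> vecs i \<and> u \<in> vecs (l - i - 1) \<and> v \<in> vecs (l - i - 1)"
      then obtain w u v where x: "x = hamming (restrict g (vecs l) (w @ [False] @ u)) (restrict g (vecs l) (w @ [True] @ v))"
        and m: "w \<in> vecs i" "u \<in> vecs (l - i - 1)" "v \<in> vecs (l - i - 1)" by blast
      have e1: "restrict g (vecs l) (w @ [False] @ u) = g (w @ [False] @ u)" using r m by blast
      have e2: "restrict g (vecs l) (w @ [True] @ v) = g (w @ [True] @ v)" using r m by blast
      have "x = hamming (g (w @ [False] @ u)) (g (w @ [True] @ v))" unfolding x e1 e2 ..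
      then show "\<exists>w u v. x = hamming (g (w @ [False] @ u)) (g (w @ [True] @ v)) \<and>
        w \<in> vecs i \<and> u \<in> vecs (l - i - 1) \<and> v \<in> vecs (l - i - 1)" using m by blast
    next
      assume "\<exists>w u v. x = hamming (g (w @ [False] @ u)) (g (w @ [True] @ v)) \<and>
        w \<in> vecs i \<and> u \<in> vecs (l - i - 1) \<and> v \<in> vecs (l - i - 1)"
      then obtain w u v where x: "x = hamming (g (w @ [False] @ u)) (g (w @ [True] @ v))"
        and m: "w \<in> vecs i" "u \<in> vecs (l - i - 1)" "v \<in> vecs (l - i - 1)" by blast
      have e1: "restrict g (vecs l) (w @ [False] @ u) = g (w @ [False] @ u)" using r m by blast
      have e2: "restrict g (vecs l) (w @ [True] @ v) = g (w @ [True] @ v)" using r m by blast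
      have "x = hamming (restrict g (vecs l) (w @ [False] @ u)) (restrict g (vecs l) (w @ [True] @ v))"
        unfolding x e1 e2 ..
      then show "\<exists>w u v. x = hamming (restrict g (vecs l) (w @ [False] @ u)) (restrict g (vecs l) (w @ [True] @ v)) \<and>
        w \<in> vecs i \<and> u \<in> vecs (l - i - 1) \<and> v \<in> vecs (l - i - 1)" using m by blast
    qed
  qed
  then show ?thesis unfolding partial_dist_def by simp
qed

lemma ke_restrict: "kernel_exponent l (restrict g (vecs l)) = kernel_exponent l g"
  unfolding kernel_exponent_def by (intro arg_cong2[where f="(*)"] sum.cong refl) (simp add: pd_restrict)

lemma finite_vecs: "finite (vecs n)"
proof -
  have "vecs n = {xs. set xs \<subseteq> (UNIV :: bool set) \<and> length xs = n}" by (auto simp: vecs_def)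
  then show ?thesis using finite_lists_length_eq[of "UNIV :: bool set" n] by simp
qed

lemma fin_K: "finite {kernel_exponent l g | g. is_kernel l g}"
proof -
  have "{kernel_exponent l g | g. is_kernel l g} \<subseteq> kernel_exponent l ` (vecs l \<rightarrow>\<^sub>E vecs l)"
  proof
    fix x assume "x \<in> {kernel_exponent l g | g. is_kernel l g}"
    then obtain g where x: "x = kernel_exponent l g" and g: "is_kernel l g" by blast
    have rf: "restrict g (vecs l) \<in> vecs l \<rightarrow>\<^sub>E vecs l"
      using bij_betw_imp_funcset[of g "vecs l" "vecs l"] g unfolding is_kernel_def by simp
    show "x \<in> kernel_exponent l ` (vecs l \<rightarrow>\<^sub>E vecs l)"
      unfolding x by (rule image_eqI[where x="restrict g (vecs l)"]) (simp add: ke_restrict, rule rf)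
  qed
  moreover have "finite (vecs l \<rightarrow>\<^sub>E vecs l)" by (intro finite_PiE finite_vecs)
  ultimately show ?thesis by (meson finite_imageI finite_subset)
qed

theorem mainTheorem14:
  shows "(\<exists>G. invertible_F2 23 G \<and>
            (\<forall>i<23. partial_dist 23 (lin_kernel 23 G) i = pd_seq23 ! i))
         \<and> E_max 23 \<ge> (1 / 23) * (\<Sum>i<23. log 23 (real (pd_seq23 ! i)))"
proof
  show "\<exists>G. invertible_F2 23 G \<and> (\<forall>i<23. partial_dist 23 (lin_kernel 23 G) i = pd_seq23 ! i)"
    using inv_G0 pd by blast
  have ke: "kernel_exponent 23 (lin_kernel 23 G0) = (1 / 23) * (\<Sum>i<23. log 23 (real (pd_seq23 ! i)))"
    unfolding kernel_exponent_def
    by (intro arg_cong2[where f="(*)"] sum.cong) (simp_all add: pd)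
  have "kernel_exponent 23 (lin_kernel 23 G0) \<in> {kernel_exponent 23 g | g. is_kernel 23 g}"
    using is_ker by blast
  then have "kernel_exponent 23 (lin_kernel 23 G0) \<le> E_max 23"
    unfolding E_max_def using fin_K by (intro Max_ge) auto
  then show "E_max 23 \<ge> (1 / 23) * (\<Sum>i<23. log 23 (real (pd_seq23 ! i)))" using ke by simp
qed

end
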